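(* Let $\Omega\subseteq\mathbb{R}^{m\times m}$ and let $d:\Omega^2\to\mathbb{R}$ be a pseudometric. Let $n\ge 2$ and define the Fermat distance function induced by $d$ as the map $d_F:\Omega^n\to\mathbb{R}$, $$d_F(A_1,\dots,A_n)=\min_{B\in\Omega}\sum_{i=1}^n d(A_i,B).$$ Then $d_F$ is a pseudo $n$-metric.
   Context: A pseudometric on $\Omega$ is a map $d:\Omega^2\to\mathbb{R}$ with $d(A,B)\ge 0$, $d(A,A)=0$, $d(A,B)=d(B,A)$ and $d(A,C)\le d(A,B)+d(B,C)$ for all $A,B,C\in\Omega$. Notation: $A_{1:n}=(A_1,\dots,A_n)$; for $A_{n+1}\in\Omega$, $A^i_{1:n,n+1}$ denotes the sequence $A_{1:n}$ with its $i$-th entry $A_i$ replaced by $A_{n+1}$; for a permutation $\sigma$ of $\{1,\dots,n\}$, $A_{\sigma(1:n)}$ is the sequence whose $i$-th entry is $A_{\sigma(i)}$. A map $D:\Omega^n\to\mathbb{R}$ is a pseudo $n$-metric if for all $A_1,\dots,A_{n+1}\in\Omega$ and all permutations $\sigma$: (1) $D(A_{1:n})\ge 0$; (2) $D(A_{1:n})=D(A_{\sigma(1:n)})$; (3) $D(A_{1:n})\le\sum_{i=1}^n D(A^i_{1:n,n+1})$ (generalized triangle inequality); (4) $D(A,\dots,A)=0$ for all $A\in\Omega$ (self-identity). *)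

theory Defs
  imports "HOL-Analysis.Analysis"
begin

definition pseudometric_on :: "'a set \<Rightarrow> ('a \<Rightarrow> 'a \<Rightarrow> real) \<Rightarrow> bool" where
  "pseudometric_on \<Omega> d \<longleftrightarrow>
     (\<forall>A\<in>\<Omega>. \<forall>B\<in>\<Omega>. d A B \<ge> 0) \<and>
     (\<forall>A\<in>\<Omega>. d A A = 0) \<and>
     (\<forall>A\<in>\<Omega>. \<forall>B\<in>\<Omega>. d A B = d B A) \<and>
     (\<forall>A\<in>\<Omega>. \<forall>B\<in>\<Omega>. \<forall>C\<in>\<Omega>. d A C \<le> d A B + d B C)"

text \<open>Tuples A_1..A_n are represented as functions nat => 'a, using the entries
  A 0, ..., A (n-1); the extra point A_{n+1} is represented by A n.\<close>
definition pseudo_n_metric_on :: "'a set \<Rightarrow> nat \<Rightarrow> ((nat \<Rightarrow> 'a) \<Rightarrow> real) \<Rightarrow> bool" where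
  "pseudo_n_metric_on \<Omega> n D \<longleftrightarrow>
     (\<forall>A. (\<forall>i<n. A i \<in> \<Omega>) \<longrightarrow> D A \<ge> 0) \<and>
     (\<forall>A \<sigma>. (\<forall>i<n. A i \<in> \<Omega>) \<longrightarrow> \<sigma> permutes {..<n} \<longrightarrow> D (\<lambda>i. A (\<sigma> i)) = D A) \<and>
     (\<forall>A. (\<forall>i\<le>n. A i \<in> \<Omega>) \<longrightarrow> D A \<le> (\<Sum>i<n. D (A(i := A n)))) \<and>
     (\<forall>X\<in>\<Omega>. D (\<lambda>_. X) = 0)"

text \<open>Fermat distance function: min over B in \<Omega> of the sum of d(A_i,B).
  It is written as an infimum; under the attainment hypothesis it is the minimum.\<close>
definition fermat_dist :: "'a set \<Rightarrow> ('a \<Rightarrow> 'a \<Rightarrow> real) \<Rightarrow> nat \<Rightarrow> (nat \<Rightarrow> 'a) \<Rightarrow> real" where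
  "fermat_dist \<Omega> d n A = Inf ((\<lambda>B. \<Sum>i<n. d (A i) B) ` \<Omega>)"

end

theory Submission
  imports Defs
begin

lemma sum_upd_lemma:
  fixes h :: "'a \<Rightarrow> real" and n i :: nat and A :: "nat \<Rightarrow> 'a"
  assumes "i < n"
  shows "(\<Sum>j<n. h ((A(i:=x)) j)) = (\<Sum>j<n. h (A j)) - h (A i) + h x"
proof -
  have "(\<Sum>j<n. h ((A(i:=x)) j)) = h x + (\<Sum>j\<in>{..<n}-{i}. h ((A(i:=x)) j))"
    using sum.remove[OF finite_lessThan[of n], of i "\<lambda>j. h ((A(i:=x)) j)"] assms by simp
  also have "(\<Sum>j\<in>{..<n}-{i}. h ((A(i:=x)) j)) = (\<Sum>j\<in>{..<n}-{i}. h (A j))"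
    by (rule sum.cong) auto
  also have "(\<Sum>j<n. h (A j)) = h (A i) + (\<Sum>j\<in>{..<n}-{i}. h (A j))"
    using sum.remove[OF finite_lessThan[of n], of i "\<lambda>j. h (A j)"] assms by simp
  ultimately show ?thesis by linarith
qed

theorem theorem1:
  fixes \<Omega> :: "(real^'m^'m) set" and d :: "real^'m^'m \<Rightarrow> real^'m^'m \<Rightarrow> real" and n :: nat
  assumes "pseudometric_on \<Omega> d"
    and "n \<ge> 2"
    and "\<And>A. (\<forall>i<n. A i \<in> \<Omega>) \<Longrightarrow>
           \<exists>B\<in>\<Omega>. \<forall>C\<in>\<Omega>. (\<Sum>i<n. d (A i) B) \<le> (\<Sum>i<n. d (A i) C)"
  shows "pseudo_n_metric_on \<Omega> n (fermat_dist \<Omega> d n)"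
proof -
  note pm = assms(1)[unfolded pseudometric_on_def]
  define D where "D = fermat_dist \<Omega> d n"
  have fnn: "(\<Sum>i<n. d (A i) B) \<ge> 0" if "\<forall>i<n. A i \<in> \<Omega>" "B \<in> \<Omega>" for A B
    using that pm by (intro sum_nonneg) auto
  have bdd: "bdd_below ((\<lambda>B. \<Sum>i<n. d (A i) B) ` \<Omega>)" if "\<forall>i<n. A i \<in> \<Omega>" for A
    using fnn[OF that] by (intro bdd_belowI[of _ 0]) auto
  have le: "D A \<le> (\<Sum>i<n. d (A i) B)" if "\<forall>i<n. A i \<in> \<Omega>" "B \<in> \<Omega>" for A B
    unfolding D_def fermat_dist_def using bdd[OF that(1)] that(2)
    by (intro cInf_lower) auto
  have att: "\<exists>B\<in>\<Omega>. D A = (\<Sum>i<n. d (A i) B)" if Ah: "\<forall>i<n. A i \<in> \<Omega>" for A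
  proof -
    obtain B where B: "B \<in> \<Omega>" "\<forall>C\<in>\<Omega>. (\<Sum>i<n. d (A i) B) \<le> (\<Sum>i<n. d (A i) C)"
      using assms(3)[OF Ah] by blast
    have "D A = (\<Sum>i<n. d (A i) B)"
      unfolding D_def fermat_dist_def using B by (intro cInf_eq_minimum) auto
    with B show ?thesis by blast
  qed
  have nn: "D A \<ge> 0" if "\<forall>i<n. A i \<in> \<Omega>" for A
    using att[OF that] fnn[OF that] by auto
  have perm: "D (\<lambda>i. A (\<sigma> i)) = D A" if "\<sigma> permutes {..<n}" for A \<sigma>
  proof -
    have "(\<Sum>i<n. d (A (\<sigma> i)) B) = (\<Sum>i<n. d (A i) B)" for B
      using sum.permute[OF that, of "\<lambda>i. d (A i) B"] by (simp add: comp_def)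
    then show ?thesis unfolding D_def fermat_dist_def by simp
  qed
  have self: "D (\<lambda>_. X) = 0" if "X \<in> \<Omega>" for X
  proof -
    have "D (\<lambda>_. X) \<le> (\<Sum>i<n. d X X)" using le[of "\<lambda>_. X" X] that by auto
    also have "\<dots> = 0" using pm that by simp
    finally show ?thesis using nn[of "\<lambda>_. X"] that by auto
  qed
  have tri: "D A \<le> (\<Sum>i<n. D (A(i := A n)))" if A: "\<forall>i\<le>n. A i \<in> \<Omega>" for A
  proof -
    have A': "\<forall>j<n. (A(i := A n)) j \<in> \<Omega>" for i using A by auto
    have An: "\<forall>j<n. A j \<in> \<Omega>" using A by auto
    have n0: "0 < n" and n1: "1 < n" using assms(2) by auto
    obtain B0 where B0: "B0 \<in> \<Omega>" "D (A(0 := A n)) = (\<Sum>j<n. d ((A(0 := A n)) j) B0)"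
      using att[OF A'] by blast
    obtain B1 where B1: "B1 \<in> \<Omega>" "D (A(1 := A n)) = (\<Sum>j<n. d ((A(1 := A n)) j) B1)"
      using att[OF A'] by blast
    have e0: "(\<Sum>j<n. d ((A(0 := A n)) j) B0) = (\<Sum>j<n. d (A j) B0) - d (A 0) B0 + d (A n) B0"
      using sum_upd_lemma[OF n0, of "\<lambda>x. d x B0"] by simp
    have "(\<Sum>j\<in>{0,1}. d ((A(1 := A n)) j) B1) \<le> (\<Sum>j<n. d ((A(1 := A n)) j) B1)"
      using n1 A B1(1) pm by (intro sum_mono2) auto
    then have s1: "d (A 0) B1 + d (A n) B1 \<le> D (A(1 := A n))" using B1 by simp
    have A0: "A 0 \<in> \<Omega>" and AN: "A n \<in> \<Omega>" using A by auto
    have t: "d (A 0) B0 \<le> d (A 0) B1 + d B1 (A n) + d (A n) B0"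
      using pm A0 AN B0(1) B1(1) by (smt (verit))
    have sym: "d B1 (A n) = d (A n) B1" using pm AN B1(1) by auto
    have "(\<Sum>i\<in>{0,1}. D (A(i := A n))) \<le> (\<Sum>i<n. D (A(i := A n)))"
      using n1 nn[OF A'] by (intro sum_mono2) (auto simp del: fun_upd_apply)
    then have s: "D (A(0 := A n)) + D (A(1 := A n)) \<le> (\<Sum>i<n. D (A(i := A n)))" by simp
    have "D A \<le> (\<Sum>j<n. d (A j) B0)" using le[OF An B0(1)] .
    also have "\<dots> \<le> D (A(0 := A n)) + D (A(1 := A n))"
      using B0(2) e0 s1 t sym by linarith
    finally show ?thesis using s by linarith
  qed
  show ?thesis unfolding pseudo_n_metric_on_def D_def[symmetric]
    using nn perm tri self by blast
qed

end
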